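(* Let \(a,b,c\) be positive integers and let \(m\) be a positive integer that is not a perfect square. Then \((a,\,b+c\sqrt m)\) spans \(1\) in \(\mathbb Z[\sqrt m]\) if and only if \((a,\,b^2-c^2m)\) spans \(1\) in \(\mathbb Z\), i.e. \(\gcd(a,b^2-c^2m)=1\).
   Context: \(\mathbb Z[\sqrt m]=\{u+v\sqrt m\mid u,v\in\mathbb Z\}\). For a commutative ring \(R\) with \(1\), a pair \((\alpha_1,\alpha_2)\) spans \(1\) in \(R\) if \(\lambda_1\alpha_1+\lambda_2\alpha_2=1\) for some \(\lambda_1,\lambda_2\in R\). *)

theory Defs
  imports Main
begin

text \<open>Elements u + v sqrt m of Z[sqrt m] are represented by integer pairs (u, v).
  Since m is not a perfect square, this representation is unique.\<close>

definition zsqrt_mult :: "int \<Rightarrow> int \<times> int \<Rightarrow> int \<times> int \<Rightarrow> int \<times> int" where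
  "zsqrt_mult m x y = (fst x * fst y + m * snd x * snd y, fst x * snd y + snd x * fst y)"

definition zsqrt_add :: "int \<times> int \<Rightarrow> int \<times> int \<Rightarrow> int \<times> int" where
  "zsqrt_add x y = (fst x + fst y, snd x + snd y)"

definition spans_one_zsqrt :: "int \<Rightarrow> int \<times> int \<Rightarrow> int \<times> int \<Rightarrow> bool" where
  "spans_one_zsqrt m \<alpha>1 \<alpha>2 \<longleftrightarrow>
     (\<exists>l1 l2. zsqrt_add (zsqrt_mult m l1 \<alpha>1) (zsqrt_mult m l2 \<alpha>2) = (1, 0))"

definition spans_one_int :: "int \<Rightarrow> int \<Rightarrow> bool" where
  "spans_one_int \<alpha>1 \<alpha>2 \<longleftrightarrow> (\<exists>l1 l2. l1 * \<alpha>1 + l2 * \<alpha>2 = 1)"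

end

theory Submission
  imports Defs
begin

theorem lemma1:
  fixes a b c m :: int
  assumes "a > 0" and "b > 0" and "c > 0" and "m > 0"
    and "\<not> (\<exists>k::int. m = k ^ 2)"
  shows "spans_one_zsqrt m (a, 0) (b, c) \<longleftrightarrow>
           spans_one_int a (b ^ 2 - c ^ 2 * m)"
proof
  assume "spans_one_zsqrt m (a, 0) (b, c)"
  then obtain p q r s where e1: "p * a + (r * b + m * s * c) = 1"
    and e2: "q * a + (r * c + s * b) = 0"
    by (auto simp: spans_one_zsqrt_def zsqrt_add_def zsqrt_mult_def)
  define u where "u = r * b + m * s * c"
  define v where "v = r * c + s * b"
  have "1 = (p*a + u)^2 - m * (q*a + v)^2" using e1 e2 u_def v_def by simp
  also have "\<dots> = (p^2*a + 2*p*u - m*q^2*a - 2*m*q*v) * a + (r^2 - m*s^2) * (b ^ 2 - c ^ 2 * m)"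
    unfolding u_def v_def by (simp add: power2_eq_square algebra_simps)
  finally show "spans_one_int a (b ^ 2 - c ^ 2 * m)"
    unfolding spans_one_int_def by metis
next
  assume "spans_one_int a (b ^ 2 - c ^ 2 * m)"
  then obtain x y where h: "x * a + y * (b ^ 2 - c ^ 2 * m) = 1"
    unfolding spans_one_int_def by blast
  have "zsqrt_add (zsqrt_mult m (x, 0) (a, 0)) (zsqrt_mult m (y*b, -y*c) (b, c)) = (1, 0)"
    using h by (simp add: zsqrt_add_def zsqrt_mult_def power2_eq_square algebra_simps)
  then show "spans_one_zsqrt m (a, 0) (b, c)"
    unfolding spans_one_zsqrt_def by blast
qed

end
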